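(* Let $X$ and $Y$ be rearrangement invariant spaces on $\mathbb{R}$ and let $c_1,c_2,c_3$ be constants such that: (i) if $f$ has support in $[0,1]$, then $\|f\|_X\le c_1\|f\|_Y$; (ii) if $f$ is constant on each interval $[n,n+1)$, $n\in\mathbb{Z}$, then $\|f\|_Y\le c_1\|f\|_X$; (iii) $\|D_{1/4}f\|_X\le c_2\|f\|_X$ and $\|D_{1/4}f\|_Y\le c_2\|f\|_Y$ for all $f$; (iv) the quasi-triangle inequality constants of $X$ and $Y$ are less than $c_3$. Then for every measurable $f$, $$\|f\|_{X+Y}\le\|f\|_{H(X,Y)}\le 2c_1c_2c_3\|f\|_{X+Y}.$$
   Context: For measurable $f$ on $\mathbb{R}$, $f^*(s)=\sup\{t:\text{measure}\{|f|>t\}>s\}$ ($s>0$). A rearrangement invariant (r.i.) space $X$ on $\mathbb{R}$ is a set of measurable functions (modulo a.e. equality) with a complete quasi-norm $\|\cdot\|_X$ such that: (1) if $g^*\le f^*$ and $f\in X$ then $g\in X$ and $\|g\|_X\le\|f\|_X$; (2) every simple function with support of finite measure is in $X$; (3) either $f_n\searrow 0$ implies $\|f_n\|_X\searrow0$, or $0\le f_n\nearrow f$ with $\sup_n\|f_n\|_X<\infty$ implies $f\in X$ and $\|f\|_X=\sup_n\|f_n\|_X$. Norms of functions not in the space are $+\infty$. The quasi-triangle inequality constant of $X$ is a $K$ with $\|f+g\|_X\le K(\|f\|_X+\|g\|_X)$. $D_af(t)=f(at)$. $\|f\|_{X+Y}=\inf\{\|f'\|_X+\|f''\|_Y: f'+f''=f\}$,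 and $\|f\|_{H(X,Y)}=\|f^*\mathbf{1}_{[0,1]}\|_X+\|f^*\mathbf{1}_{[1,\infty)}\|_Y$, where $f^*\mathbf{1}_{[0,1]}$ denotes the function on $\mathbb{R}$ equal to $f^*$ on $(0,1]$ and $0$ elsewhere, and similarly for $[1,\infty)$. *)

theory Defs
  imports "HOL-Analysis.Analysis"
begin

text \<open>Functions on the real line are real-valued; measurability is Lebesgue measurability.
  Quasi-norms take values in [0, \<infinity>], with value \<infinity> exactly off the space.\<close>

abbreviation lmeas :: "(real \<Rightarrow> real) set" where
  "lmeas \<equiv> borel_measurable lebesgue"

definition rearr :: "(real \<Rightarrow> real) \<Rightarrow> real \<Rightarrow> ereal" where
  "rearr f s = Sup {ereal t | t. emeasure lebesgue {x. t < \<bar>f x\<bar>} > ennreal s}"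

definition dilate :: "real \<Rightarrow> (real \<Rightarrow> real) \<Rightarrow> real \<Rightarrow> real" where
  "dilate a f = (\<lambda>t. f (a * t))"

definition quasi_triangle_const :: "((real \<Rightarrow> real) \<Rightarrow> ennreal) \<Rightarrow> real \<Rightarrow> bool" where
  "quasi_triangle_const N K \<longleftrightarrow>
     (\<forall>f g. N (\<lambda>x. f x + g x) \<le> ennreal K * (N f + N g))"

definition ri_space :: "((real \<Rightarrow> real) \<Rightarrow> ennreal) \<Rightarrow> bool" where
  "ri_space N \<longleftrightarrow>
     \<comment> \<open>elements are measurable functions\<close>
     (\<forall>f. N f < \<infinity> \<longrightarrow> f \<in> lmeas) \<and>
     \<comment> \<open>quasi-norm axioms (modulo a.e. equality)\<close>
     (\<forall>f\<in>lmeas. N f = 0 \<longleftrightarrow> (AE x in lebesgue. f x = 0)) \<and>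
     (\<forall>f\<in>lmeas. \<forall>c. N (\<lambda>x. c * f x) = ennreal \<bar>c\<bar> * N f) \<and>
     (\<exists>K. quasi_triangle_const N K) \<and>
     \<comment> \<open>completeness\<close>
     (\<forall>u :: nat \<Rightarrow> real \<Rightarrow> real.
        (\<forall>n. N (u n) < \<infinity>) \<longrightarrow>
        (\<forall>e>0. \<exists>M. \<forall>m\<ge>M. \<forall>n\<ge>M. N (\<lambda>x. u m x - u n x) < ennreal e) \<longrightarrow>
        (\<exists>g. N g < \<infinity> \<and> ((\<lambda>n. N (\<lambda>x. u n x - g x)) \<longlonglongrightarrow> 0))) \<and>
     \<comment> \<open>(1) rearrangement invariance / lattice property\<close>
     (\<forall>f\<in>lmeas. \<forall>g\<in>lmeas. (\<forall>s>0. rearr g s \<le> rearr f s) \<longrightarrow> N g \<le> N f) \<and>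
     \<comment> \<open>(2) simple functions with support of finite measure belong to the space\<close>
     (\<forall>f\<in>lmeas. finite (range f) \<and> emeasure lebesgue {x. f x \<noteq> 0} < \<infinity> \<longrightarrow> N f < \<infinity>) \<and>
     \<comment> \<open>(3) order continuity or Fatou property\<close>
     ((\<forall>u :: nat \<Rightarrow> real \<Rightarrow> real.
         (\<forall>n. u n \<in> lmeas) \<and> (\<forall>n x. 0 \<le> u (Suc n) x \<and> u (Suc n) x \<le> u n x) \<and>
         (\<forall>x. 0 \<le> u 0 x) \<and> (\<forall>x. (\<lambda>n. u n x) \<longlonglongrightarrow> 0) \<and> N (u 0) < \<infinity>
         \<longrightarrow> ((\<lambda>n. N (u n)) \<longlonglongrightarrow> 0))
      \<or>
      (\<forall>(u :: nat \<Rightarrow> real \<Rightarrow> real) f.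
         (\<forall>n. u n \<in> lmeas) \<and> (\<forall>n x. 0 \<le> u n x \<and> u n x \<le> u (Suc n) x) \<and>
         (\<forall>x. (\<lambda>n. u n x) \<longlonglongrightarrow> f x) \<and> (SUP n. N (u n)) < \<infinity>
         \<longrightarrow> N f < \<infinity> \<and> N f = (SUP n. N (u n))))"

definition sum_norm :: "((real \<Rightarrow> real) \<Rightarrow> ennreal) \<Rightarrow> ((real \<Rightarrow> real) \<Rightarrow> ennreal)
    \<Rightarrow> (real \<Rightarrow> real) \<Rightarrow> ennreal" where
  "sum_norm NX NY f = (INF p \<in> {(f', f''). \<forall>x. f' x + f'' x = f x}. NX (fst p) + NY (snd p))"

text \<open>Norm of H(X,Y). If f* is infinite somewhere on (0,\<infinity>), the functions f* 1_[0,1], f* 1_[1,\<infinity>)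
  are not (a.e. finite) real functions, and the norm is taken to be \<infinity>.\<close>
definition H_norm :: "((real \<Rightarrow> real) \<Rightarrow> ennreal) \<Rightarrow> ((real \<Rightarrow> real) \<Rightarrow> ennreal)
    \<Rightarrow> (real \<Rightarrow> real) \<Rightarrow> ennreal" where
  "H_norm NX NY f =
     (if \<exists>s>0. rearr f s = \<infinity> then \<infinity>
      else NX (\<lambda>t. if 0 < t \<and> t \<le> 1 then real_of_ereal (rearr f t) else 0)
         + NY (\<lambda>t. if 1 \<le> t then real_of_ereal (rearr f t) else 0))"

end

theory Submission
  imports Defs
begin


definition mu :: "(real \<Rightarrow> real) \<Rightarrow> real \<Rightarrow> ennreal" where
  "mu f t = emeasure lebesgue {x. t < \<bar>f x\<bar>}"

lemma mu_set[measurable]: assumes [measurable]: "f \<in> lmeas" shows "{x. t < \<bar>f x\<bar>} \<in> sets lebesgue"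
proof -
  have "{x \<in> space lebesgue. t < \<bar>f x\<bar>} \<in> sets lebesgue" by measurable
  then show ?thesis by simp
qed

lemma leb_UNIV: "emeasure lebesgue (UNIV::real set) = \<infinity>"
  by simp

lemma leb_Ici: "emeasure lebesgue {a::real..} = \<infinity>"
proof (rule ccontr)
  assume "emeasure lebesgue {a..} \<noteq> \<infinity>"
  then have "emeasure lebesgue {a..} < top" by (simp add: top.not_eq_extremum)
  then obtain n::nat where n: "emeasure lebesgue {a..} < of_nat n" using ennreal_Ex_less_of_nat by blast
  have "emeasure lebesgue {a..a + real n} \<le> emeasure lebesgue {a..}"
    by (rule emeasure_mono) auto
  then have "ennreal (real n) \<le> emeasure lebesgue {a..}" by simp
  with n show False by (simp add: ennreal_of_nat_eq_real_of_nat)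
qed

lemma mu_neg: "t < 0 \<Longrightarrow> mu f t = \<infinity>"
proof -
  assume "t < 0"
  then have "{x. t < \<bar>f x\<bar>} = UNIV" by auto
  then show ?thesis by (simp add: mu_def)
qed

lemma mu_anti: "f \<in> lmeas \<Longrightarrow> t \<le> t' \<Longrightarrow> mu f t' \<le> mu f t"
  unfolding mu_def by (rule emeasure_mono) auto

lemma mu_rc: assumes f: "f \<in> lmeas" shows "mu f t = (SUP n. mu f (t + 1 / Suc n))"
proof -
  let ?A = "\<lambda>n. {x. t + 1 / Suc n < \<bar>f x\<bar>}"
  have inc: "incseq ?A"
  proof (rule incseq_SucI)
    fix n
    have "t + 1 / Suc (Suc n) \<le> t + 1 / Suc n" by (simp add: frac_le)
    then show "?A n \<subseteq> ?A (Suc n)" by auto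
  qed
  have U: "(\<Union>n. ?A n) = {x. t < \<bar>f x\<bar>}"
  proof safe
    fix x n assume "t + 1 / Suc n < \<bar>f x\<bar>"
    moreover have "0 < 1 / real (Suc n)" by simp
    ultimately show "t < \<bar>f x\<bar>" by linarith
  next
    fix x assume "t < \<bar>f x\<bar>"
    then obtain n where "1 / Suc n < \<bar>f x\<bar> - t"
      using reals_Archimedean by (metis diff_gt_0_iff_gt inverse_eq_divide of_nat_Suc)
    then have "t + 1 / Suc n < \<bar>f x\<bar>" by simp
    then show "x \<in> (\<Union>n. ?A n)" by blast
  qed
  have "(SUP n. emeasure lebesgue (?A n)) = emeasure lebesgue (\<Union>n. ?A n)"
    by (rule SUP_emeasure_incseq) (use f inc in auto)
  then show ?thesis unfolding mu_def U by simp
qed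

lemma K1a: assumes f: "f \<in> lmeas" and a: "ereal t < rearr f s" shows "ennreal s < mu f t"
proof -
  obtain x where x: "x \<in> {ereal t | t. emeasure lebesgue {x. t < \<bar>f x\<bar>} > ennreal s}" "ereal t < x"
    using a unfolding rearr_def by (subst (asm) less_Sup_iff) blast
  then obtain t' where t': "x = ereal t'" "emeasure lebesgue {x. t' < \<bar>f x\<bar>} > ennreal s" by blast
  have "t \<le> t'" using x(2) t'(1) by simp
  then have "mu f t' \<le> mu f t" by (rule mu_anti[OF f])
  moreover have "ennreal s < mu f t'" using t'(2) unfolding mu_def .
  ultimately show ?thesis using less_le_trans by metis
qed

lemma K1b: assumes f: "f \<in> lmeas" and a: "ennreal s < mu f t" shows "ereal t < rearr f s"
proof -
  have "ennreal s < (SUP n. mu f (t + 1 / Suc n))" using a by (subst (asm) mu_rc[OF f])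
  then obtain n where n: "ennreal s < mu f (t + 1 / Suc n)" by (subst (asm) less_SUP_iff) blast
  have "ereal (t + 1 / Suc n) \<in> {ereal t | t. emeasure lebesgue {x. t < \<bar>f x\<bar>} > ennreal s}"
    using n unfolding mu_def by blast
  then have "ereal (t + 1 / Suc n) \<le> rearr f s"
    unfolding rearr_def by (rule Sup_upper)
  moreover have "ereal t < ereal (t + 1 / Suc n)" by simp
  ultimately show ?thesis using less_le_trans by metis
qed

lemma K1: "f \<in> lmeas \<Longrightarrow> (ereal t < rearr f s) = (ennreal s < mu f t)"
  using K1a K1b by blast

lemma rearr_nonneg: assumes f: "f \<in> lmeas" shows "0 \<le> rearr f s"
proof (rule ccontr)
  assume "\<not> 0 \<le> rearr f s"
  then have "rearr f s < 0" by simp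
  then obtain r where r: "rearr f s < ereal r" "ereal r < 0" using ereal_dense2 by blast
  then have "r < 0" by simp
  then have "ereal r < rearr f s" using K1[OF f] mu_neg by simp
  with r show False using less_asym by blast
qed

lemma rearr_anti: "s \<le> s' \<Longrightarrow> rearr f s' \<le> rearr f s"
  unfolding rearr_def
  apply (rule Sup_subset_mono)
  apply clarsimp
  subgoal for t using ennreal_leI[of s s'] le_less_trans by blast
  done

lemma K2: assumes f: "f \<in> lmeas" and fin: "rearr f s \<noteq> \<infinity>"
  shows "(t < real_of_ereal (rearr f s)) = (ennreal s < mu f t)"
proof -
  have "0 \<le> rearr f s" by (rule rearr_nonneg[OF f])
  then obtain r where r: "rearr f s = ereal r" using fin by (cases "rearr f s") auto
  show ?thesis using K1[OF f, of t s] r by simp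
qed

lemma rearr_mono_mu: "(\<And>t. mu g t \<le> mu f t) \<Longrightarrow> rearr g s \<le> rearr f s"
  unfolding rearr_def mu_def
  by (rule Sup_subset_mono) (auto intro: less_le_trans)



lemma ri_meas: assumes N: "ri_space N" shows "N f < \<infinity> \<Longrightarrow> f \<in> lmeas"
  using N[unfolded ri_space_def, THEN conjunct1] by blast
lemma ri_zero: assumes N: "ri_space N" shows "f \<in> lmeas \<Longrightarrow> N f = 0 \<longleftrightarrow> (AE x in lebesgue. f x = 0)"
  using N[unfolded ri_space_def, THEN conjunct2, THEN conjunct1] by blast
lemma ri_hom: assumes N: "ri_space N" shows "f \<in> lmeas \<Longrightarrow> N (\<lambda>x. c * f x) = ennreal \<bar>c\<bar> * N f"
  using N[unfolded ri_space_def, THEN conjunct2, THEN conjunct2, THEN conjunct1] by blast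
lemma ri_ri: assumes N: "ri_space N" shows "f \<in> lmeas \<Longrightarrow> g \<in> lmeas \<Longrightarrow> (\<forall>s>0. rearr g s \<le> rearr f s) \<Longrightarrow> N g \<le> N f"
  using N[unfolded ri_space_def, THEN conjunct2, THEN conjunct2, THEN conjunct2, THEN conjunct2, THEN conjunct2, THEN conjunct1] by blast
lemma ri_simple: assumes N: "ri_space N" shows "f \<in> lmeas \<Longrightarrow> finite (range f) \<Longrightarrow> emeasure lebesgue {x. f x \<noteq> 0} < \<infinity> \<Longrightarrow> N f < \<infinity>"
  using N[unfolded ri_space_def, THEN conjunct2, THEN conjunct2, THEN conjunct2, THEN conjunct2, THEN conjunct2, THEN conjunct2, THEN conjunct1] by blast

lemma RI: assumes N: "ri_space N" and f: "f \<in> lmeas" and g: "g \<in> lmeas"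
  and le: "\<And>t. 0 \<le> t \<Longrightarrow> mu g t \<le> mu f t"
  shows "N g \<le> N f"
proof -
  have "mu g t \<le> mu f t" for t
    using le[of t] mu_neg[of t] by (cases "0 \<le> t") auto
  then show ?thesis using ri_ri[OF N f g] rearr_mono_mu by blast
qed

lemma RI_pw: assumes N: "ri_space N" and f: "f \<in> lmeas" and g: "g \<in> lmeas"
  and le: "\<And>x. \<bar>g x\<bar> \<le> \<bar>f x\<bar>"
  shows "N g \<le> N f"
proof (rule RI[OF N f g])
  fix t :: real
  show "mu g t \<le> mu f t" unfolding mu_def
    by (rule emeasure_mono) (use le f in \<open>auto intro: less_le_trans\<close>)
qed

lemma dilate_meas: assumes g: "g \<in> lmeas" shows "dilate (1/4) g \<in> lmeas"
proof -
  have T: "(\<lambda>x::real. 0 + (\<Sum>j\<in>Basis. ((1/4) * (x \<bullet> j)) *\<^sub>R j)) \<in> lebesgue \<rightarrow>\<^sub>M lebesgue"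
    by (rule lebesgue_affine_measurable) auto
  have "(\<lambda>x::real. 0 + (\<Sum>j\<in>Basis. ((1/4) * (x \<bullet> j)) *\<^sub>R j)) = (\<lambda>x. (1/4) * x)"
    by auto
  with T have "(\<lambda>x::real. (1/4) * x) \<in> lebesgue \<rightarrow>\<^sub>M lebesgue" by simp
  then show ?thesis unfolding dilate_def using g by (rule measurable_compose)
qed

lemma mu_dilate: "mu (dilate (1/4) g) t = 4 * mu g t"
proof -
  have "{x. t < \<bar>dilate (1/4) g x\<bar>} = (\<lambda>x. 4 *\<^sub>R x + 0) ` {x. t < \<bar>g x\<bar>}"
  proof safe
    fix x assume "t < \<bar>dilate (1/4) g x\<bar>"
    then show "x \<in> (\<lambda>x. 4 *\<^sub>R x + 0) ` {x. t < \<bar>g x\<bar>}"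
      by (intro image_eqI[of _ _ "x/4"]) (auto simp: dilate_def)
  qed (auto simp: dilate_def)
  then show ?thesis unfolding mu_def using emeasure_lebesgue_affine[of 4 0 "{x. t < \<bar>g x\<bar>}"] by simp
qed

lemma ind_meas: "(indicator {a..<b} :: real \<Rightarrow> real) \<in> lmeas"
  by (intro borel_measurable_indicator) auto

lemma ind_fin: assumes N: "ri_space N" shows "N (indicator {a..<b} :: real \<Rightarrow> real) < \<infinity>"
proof (rule ri_simple[OF N ind_meas])
  show "finite (range (indicator {a..<b} :: real \<Rightarrow> real))"
    by (rule finite_subset[of _ "{0,1}"]) (auto simp: indicator_def)
  have "{x. (indicator {a..<b} x :: real) \<noteq> 0} = {a..<b}" by (auto simp: indicator_def)
  then show "emeasure lebesgue {x. (indicator {a..<b} x :: real) \<noteq> 0} < \<infinity>"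
    by (cases "a \<le> b") auto
qed

lemma ind_pos: assumes N: "ri_space N" and ab: "a < b" shows "N (indicator {a..<b} :: real \<Rightarrow> real) \<noteq> 0"
proof
  assume "N (indicator {a..<b} :: real \<Rightarrow> real) = 0"
  then have "AE x in lebesgue. (indicator {a..<b} x :: real) = 0" using ri_zero[OF N ind_meas] by blast
  then have "{x \<in> space lebesgue. \<not> (indicator {a..<b} x :: real) = 0} \<in> null_sets lebesgue"
    by (subst (asm) AE_iff_null) (use ind_meas in \<open>measurable\<close>)
  moreover have "{x \<in> space lebesgue. \<not> (indicator {a..<b} x :: real) = 0} = {a..<b}"
    by (auto simp: indicator_def)
  ultimately have "emeasure lebesgue {a..<b} = 0" by auto
  with ab show False by simp
qed



lemma bor_leb: assumes "f \<in> borel_measurable borel" shows "(f :: real \<Rightarrow> real) \<in> lmeas"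
  by (rule measurable_completion) (simp add: assms)

lemma fin_rearr: assumes N: "ri_space N" and g: "g \<in> lmeas" and Ng: "N g < \<infinity>" and s: "0 < s"
  shows "rearr g s \<noteq> \<infinity>"
proof
  assume inf: "rearr g s = \<infinity>"
  define u where "u = (indicator {0..<s} :: real \<Rightarrow> real)"
  have um: "u \<in> lmeas" unfolding u_def by (rule ind_meas)
  have le: "N (\<lambda>x. real n * u x) \<le> N g" for n :: nat
  proof (rule RI[OF N g])
    show "(\<lambda>x. real n * u x) \<in> lmeas" using um by measurable
  next
    fix t :: real assume t: "0 \<le> t"
    show "mu (\<lambda>x. real n * u x) t \<le> mu g t"
    proof (cases "t < real n")
      case True
      have "ereal t < rearr g s" using inf by simp
      then have 1: "ennreal s < mu g t" using K1[OF g] by blast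
      have "mu (\<lambda>x. real n * u x) t \<le> emeasure lebesgue {0..<s}"
        unfolding mu_def by (rule emeasure_mono) (use t in \<open>auto simp: u_def indicator_def split: if_splits\<close>)
      also have "\<dots> = ennreal s" using s by simp
      finally show ?thesis using 1 by simp
    next
      case False
      then have "{x. t < \<bar>real n * u x\<bar>} = {}" by (auto simp: u_def indicator_def)
      then show ?thesis unfolding mu_def by simp
    qed
  qed
  have hom: "N (\<lambda>x. real n * u x) = ennreal (real n) * N u" for n :: nat
    using ri_hom[OF N um, of "real n"] by simp
  have "N u < \<infinity>" "N u \<noteq> 0" unfolding u_def using ind_fin[OF N] ind_pos[OF N s] by auto
  then obtain c0 where c0: "N u = ennreal c0" by (cases "N u") auto
  then have "0 < c0" using \<open>N u \<noteq> 0\<close> by (metis ennreal_eq_0_iff not_less)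
  then obtain c where c: "N u = ennreal c" "0 < c" using c0 by blast
  obtain r where r: "N g = ennreal r" "0 \<le> r" using Ng by (cases "N g") auto
  obtain n :: nat where n: "r / c < real n" using reals_Archimedean2 by blast
  have "ennreal (real n * c) \<le> ennreal r" using le[of n] hom[of n] c r by (simp add: ennreal_mult)
  then have "real n * c \<le> r" using r(2) by simp
  moreover have "r < real n * c" using n c(2) by (simp add: field_simps)
  ultimately show False by simp
qed

lemma c1_ge: assumes X: "ri_space NX" and Y: "ri_space NY"
    and i: "\<And>f. f \<in> lmeas \<Longrightarrow> (\<forall>x. x \<notin> {0..1} \<longrightarrow> f x = 0) \<Longrightarrow> NX f \<le> ennreal c1 * NY f"
    and ii: "\<And>f. f \<in> lmeas \<Longrightarrow>
               (\<forall>n::int. \<forall>x\<in>{real_of_int n..<real_of_int n + 1}. f x = f (real_of_int n)) \<Longrightarrow>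
               NY f \<le> ennreal c1 * NX f"
  shows "1 \<le> c1"
proof -
  define u where "u = (indicator {0..<1} :: real \<Rightarrow> real)"
  have um: "u \<in> lmeas" unfolding u_def by (rule ind_meas)
  have 1: "NX u \<le> ennreal c1 * NY u"
    by (rule i[OF um]) (auto simp: u_def indicator_def)
  have 2: "NY u \<le> ennreal c1 * NX u"
  proof (rule ii[OF um], intro allI ballI)
    fix n :: int and x assume x: "x \<in> {real_of_int n..<real_of_int n + 1}"
    show "u x = u (real_of_int n)"
    proof (cases "n = 0")
      case False
      then have "n \<ge> 1 \<or> n \<le> -1" by linarith
      then show ?thesis using x by (auto simp: u_def indicator_def)
    qed (use x in \<open>auto simp: u_def indicator_def\<close>)
  qed
  have "NX u < \<infinity>" "NX u \<noteq> 0" unfolding u_def using ind_fin[OF X] ind_pos[OF X] by auto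
  then obtain a0 where a0: "NX u = ennreal a0" by (cases "NX u") auto
  then have "0 < a0" using \<open>NX u \<noteq> 0\<close> by (metis ennreal_eq_0_iff not_less)
  then obtain a where a: "NX u = ennreal a" "0 < a" using a0 by blast
  have c1: "0 \<le> c1"
  proof (rule ccontr)
    assume "\<not> 0 \<le> c1"
    then have "ennreal c1 = 0" by (simp add: ennreal_eq_0_iff)
    then have "NX u = 0" using 1 by simp
    then show False using a by simp
  qed
  have "NX u \<le> ennreal c1 * (ennreal c1 * NX u)" using 1 2 by (meson mult_left_mono order_trans zero_le)
  then have "ennreal a \<le> ennreal (c1 * (c1 * a))" using a c1 by (simp add: ennreal_mult)
  then have "a \<le> c1 * (c1 * a)" using a c1 by (simp add: ennreal_le_iff)
  then have "1 * a \<le> (c1 * c1) * a" by (simp add: mult.assoc)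
  then have "1 \<le> c1 * c1" using a(2) by (simp add: mult_le_cancel_right)
  show ?thesis
  proof (rule ccontr)
    assume "\<not> 1 \<le> c1"
    then have "c1 * c1 \<le> c1 * 1" using c1 by (intro mult_left_mono) auto
    then show False using \<open>1 \<le> c1 * c1\<close> \<open>\<not> 1 \<le> c1\<close> by simp
  qed
qed

lemma c2_pos: assumes X: "ri_space NX"
    and iiiX: "\<And>f. f \<in> lmeas \<Longrightarrow> NX (dilate (1/4) f) \<le> ennreal c2 * NX f"
  shows "0 < c2"
proof (rule ccontr)
  assume "\<not> 0 < c2"
  then have "ennreal c2 = 0" by (simp add: ennreal_eq_0_iff)
  then have "NX (dilate (1/4) (indicator {0..<1})) = 0" using iiiX[OF ind_meas[of 0 1]] by simp
  moreover have "dilate (1/4) (indicator {0..<1}) = (indicator {0..<4} :: real \<Rightarrow> real)"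
    by (auto simp: dilate_def indicator_def)
  ultimately show False using ind_pos[OF X, of 0 4] by simp
qed

definition Rg :: "(real \<Rightarrow> real) \<Rightarrow> real \<Rightarrow> real" where
  "Rg g t = (if 0 < t then real_of_ereal (rearr g t) else 0)"

lemma Rg_nonneg: "g \<in> lmeas \<Longrightarrow> 0 \<le> Rg g t"
  unfolding Rg_def using rearr_nonneg real_of_ereal_pos by auto

lemma Rg_anti: assumes g: "g \<in> lmeas" and fin: "\<forall>s>0. rearr g s \<noteq> \<infinity>" and t: "0 < t" "t \<le> t'"
  shows "Rg g t' \<le> Rg g t"
proof -
  have "real_of_ereal (rearr g t') \<le> real_of_ereal (rearr g t)"
    using rearr_nonneg[OF g] rearr_anti[OF t(2)] fin t by (intro real_of_ereal_positive_mono) auto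
  then show ?thesis using t unfolding Rg_def by auto
qed

lemma Rg_meas: assumes g: "g \<in> lmeas" and fin: "\<forall>s>0. rearr g s \<noteq> \<infinity>"
  shows "Rg g \<in> borel_measurable borel"
proof -
  have "(\<lambda>t. - Rg g t) \<in> borel_measurable borel"
  proof (rule borel_measurable_piecewise_mono[of "{{0<..}, {..0}}"])
    fix c assume "c \<in> {{0<..}, {..0::real}}"
    show "mono_on c (\<lambda>t. - Rg g t)"
    proof (rule mono_onI)
      fix r s assume rs: "r \<in> c" "s \<in> c" "r \<le> s"
      show "- Rg g r \<le> - Rg g s"
      proof (cases "c = {0<..}")
        case True
        then show ?thesis using Rg_anti[OF g fin, of r s] rs by auto
      next
        case False
        then have "c = {..0}" using \<open>c \<in> _\<close> by auto
        then show ?thesis using rs by (auto simp: Rg_def)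
      qed
    qed
  qed auto
  then have "(\<lambda>t. - (- Rg g t)) \<in> borel_measurable borel" by measurable
  then show ?thesis by simp
qed

lemma Rg_gt: assumes g: "g \<in> lmeas" and fin: "\<forall>s>0. rearr g s \<noteq> \<infinity>" and t: "0 < t"
  shows "(\<tau> < Rg g t) = (ennreal t < mu g \<tau>)"
  using K2[OF g, of t \<tau>] fin t unfolding Rg_def by auto

lemma DB: assumes g: "g \<in> lmeas" and fin: "\<forall>s>0. rearr g s \<noteq> \<infinity>"
  and pos: "\<And>t. t \<in> I \<Longrightarrow> 0 < \<psi> t"
  and box: "\<And>t c. t \<in> I \<Longrightarrow> 0 \<le> c \<Longrightarrow> \<psi> t < c \<Longrightarrow> a \<le> t \<and> t \<le> a + 2 * c"
  and tau: "0 \<le> \<tau>"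
  shows "mu (\<lambda>t. if t \<in> I then Rg g (\<psi> t) else 0) \<tau> \<le> mu (dilate (1/4) g) \<tau>"
proof (cases "mu g \<tau> = \<infinity>")
  case True
  then show ?thesis by (simp add: mu_dilate)
next
  case False
  then obtain m where m: "mu g \<tau> = ennreal m" "0 \<le> m" by (cases "mu g \<tau>") auto
  have "{t. \<tau> < \<bar>if t \<in> I then Rg g (\<psi> t) else 0\<bar>} \<subseteq> {a..a + 2 * m}"
  proof
    fix t assume "t \<in> {t. \<tau> < \<bar>if t \<in> I then Rg g (\<psi> t) else 0\<bar>}"
    then have tI: "t \<in> I" and lt: "\<tau> < \<bar>Rg g (\<psi> t)\<bar>" using tau by (auto split: if_splits)
    have "\<tau> < Rg g (\<psi> t)" using lt Rg_nonneg[OF g] by simp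
    then have "ennreal (\<psi> t) < ennreal m" using Rg_gt[OF g fin pos[OF tI]] m by simp
    then have "\<psi> t < m" using pos[OF tI] by (simp add: ennreal_less_iff)
    then show "t \<in> {a..a + 2 * m}" using box[OF tI m(2)] by simp
  qed
  then have "mu (\<lambda>t. if t \<in> I then Rg g (\<psi> t) else 0) \<tau> \<le> emeasure lebesgue {a..a + 2 * m}"
    unfolding mu_def by (rule emeasure_mono) simp
  also have "\<dots> = ennreal (2 * m)" using m by simp
  also have "\<dots> \<le> ennreal (4 * m)" using m by simp
  also have "\<dots> = mu (dilate (1/4) g) \<tau>" using m by (simp add: mu_dilate ennreal_mult)
  finally show ?thesis .
qed

lemma SUBADD: assumes g: "g \<in> lmeas" and h: "h \<in> lmeas" and s: "0 < s"
  and fg: "rearr g (s/2) \<noteq> \<infinity>" and fh: "rearr h (s/2) \<noteq> \<infinity>"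
  shows "rearr (\<lambda>x. g x + h x) s \<le> ereal (real_of_ereal (rearr g (s/2)) + real_of_ereal (rearr h (s/2)))"
proof (rule ccontr)
  define a where "a = real_of_ereal (rearr g (s/2))"
  define b where "b = real_of_ereal (rearr h (s/2))"
  have fm: "(\<lambda>x. g x + h x) \<in> lmeas" using g h by measurable
  assume "\<not> ?thesis"
  then have "ereal (a + b) < rearr (\<lambda>x. g x + h x) s" unfolding a_def b_def by simp
  then have 1: "ennreal s < mu (\<lambda>x. g x + h x) (a + b)" using K1[OF fm] by blast
  have "mu (\<lambda>x. g x + h x) (a + b) \<le> emeasure lebesgue ({x. a < \<bar>g x\<bar>} \<union> {x. b < \<bar>h x\<bar>})"
    unfolding mu_def by (rule emeasure_mono) (use g h in auto)
  also have "\<dots> \<le> mu g a + mu h b" unfolding mu_def by (rule emeasure_subadditive) (use g h in auto)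
  also have "mu g a \<le> ennreal (s/2)" using K2[OF g fg, of a] unfolding a_def by (simp add: not_less)
  also have "mu h b \<le> ennreal (s/2)" using K2[OF h fh, of b] unfolding b_def by (simp add: not_less)
  finally have "mu (\<lambda>x. g x + h x) (a + b) \<le> ennreal (s/2) + ennreal (s/2)" by simp
  also have "\<dots> = ennreal s" using s by (simp flip: ennreal_plus)
  finally show False using 1 by simp
qed



lemma INF_bound: fixes C H :: ennreal
  assumes C: "0 < C" "C < top" and le: "\<And>p. p \<in> P \<Longrightarrow> H \<le> C * F p"
  shows "H \<le> C * (INF p\<in>P. F p)"
proof -
  have "H / C \<le> (INF p\<in>P. F p)"
    by (rule INF_greatest) (use le C in \<open>auto intro: divide_le_posI_ennreal\<close>)
  then have "H / C * C \<le> (INF p\<in>P. F p) * C" by (rule mult_right_mono) simp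
  moreover have "H / C * C = H" using C by (simp add: ennreal_divide_times)
  ultimately show ?thesis by (simp add: mult.commute)
qed

lemma real_le_of_rearr: assumes "0 \<le> r" "r \<le> ereal y" shows "real_of_ereal r \<le> y"
proof -
  have "real_of_ereal r \<le> real_of_ereal (ereal y)"
    by (rule real_of_ereal_positive_mono) (use assms in auto)
  then show ?thesis by simp
qed

lemma partB_pair:
  fixes NX NY :: "(real \<Rightarrow> real) \<Rightarrow> ennreal" and c1 c2 c3 :: real
  assumes X: "ri_space NX" and Y: "ri_space NY"
    and i: "\<And>f. f \<in> lmeas \<Longrightarrow> (\<forall>x. x \<notin> {0..1} \<longrightarrow> f x = 0) \<Longrightarrow> NX f \<le> ennreal c1 * NY f"
    and ii: "\<And>f. f \<in> lmeas \<Longrightarrow>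
               (\<forall>n::int. \<forall>x\<in>{real_of_int n..<real_of_int n + 1}. f x = f (real_of_int n)) \<Longrightarrow>
               NY f \<le> ennreal c1 * NX f"
    and iiiX: "\<And>f. f \<in> lmeas \<Longrightarrow> NX (dilate (1/4) f) \<le> ennreal c2 * NX f"
    and iiiY: "\<And>f. f \<in> lmeas \<Longrightarrow> NY (dilate (1/4) f) \<le> ennreal c2 * NY f"
    and KX: "quasi_triangle_const NX KX" "KX < c3"
    and KY: "quasi_triangle_const NY KY" "KY < c3"
    and c1: "1 \<le> c1" and c2: "0 < c2"
    and gX: "NX g < \<infinity>" and hY: "NY h < \<infinity>"
  shows "H_norm NX NY (\<lambda>x. g x + h x) \<le> ennreal (2 * c1 * c2 * c3) * (NX g + NY h)"
proof -
  have g[measurable]: "g \<in> lmeas" using ri_meas[OF X gX] .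
  have h[measurable]: "h \<in> lmeas" using ri_meas[OF Y hY] .
  have fg: "\<forall>s>0. rearr g s \<noteq> \<infinity>" using fin_rearr[OF X g gX] by blast
  have fh: "\<forall>s>0. rearr h s \<noteq> \<infinity>" using fin_rearr[OF Y h hY] by blast
  define f where "f = (\<lambda>x. g x + h x)"
  have f[measurable]: "f \<in> lmeas" unfolding f_def by measurable
  have sub: "rearr f s \<le> ereal (Rg g (s/2) + Rg h (s/2))" if s: "0 < s" for s
    using SUBADD[OF g h s] fg fh s unfolding f_def Rg_def by auto
  have ff: "\<forall>s>0. rearr f s \<noteq> \<infinity>"
    using sub by (metis ereal_infty_less_eq(1) ereal_less_eq(3) PInfty_neq_ereal(1))
  have [measurable]: "Rg g \<in> borel_measurable borel" by (rule Rg_meas[OF g fg])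
  have [measurable]: "Rg h \<in> borel_measurable borel" by (rule Rg_meas[OF h fh])
  have [measurable]: "Rg f \<in> borel_measurable borel" by (rule Rg_meas[OF f ff])
  define F1 where "F1 = (\<lambda>t. if t \<in> {0<..1} then Rg f t else 0)"
  define F2 where "F2 = (\<lambda>t. if t \<in> {1..} then Rg f t else 0)"
  define G1 where "G1 = (\<lambda>t. if t \<in> {0<..1} then Rg g (t/2) else 0)"
  define H1 where "H1 = (\<lambda>t. if t \<in> {0<..1} then Rg h (t/2) else 0)"
  define G2 where "G2 = (\<lambda>t. if t \<in> {1..} then Rg g (t/2) else 0)"
  define H2 where "H2 = (\<lambda>t. if t \<in> {1..} then Rg h (t/2) else 0)"
  define Sg where "Sg = (\<lambda>t::real. if t \<in> {1..} then Rg g (real_of_int \<lfloor>t\<rfloor> / 2) else 0)"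
  have mF1: "F1 \<in> lmeas" unfolding F1_def by (rule bor_leb) measurable
  have mF2: "F2 \<in> lmeas" unfolding F2_def by (rule bor_leb) measurable
  have mG1: "G1 \<in> lmeas" unfolding G1_def by (rule bor_leb) measurable
  have mH1: "H1 \<in> lmeas" unfolding H1_def by (rule bor_leb) measurable
  have mG2: "G2 \<in> lmeas" unfolding G2_def by (rule bor_leb) measurable
  have mH2: "H2 \<in> lmeas" unfolding H2_def by (rule bor_leb) measurable
  have mS: "Sg \<in> lmeas" unfolding Sg_def by (rule bor_leb) measurable
  have mGH1: "(\<lambda>t. G1 t + H1 t) \<in> lmeas" using mG1 mH1 by measurable
  have mGH2: "(\<lambda>t. G2 t + H2 t) \<in> lmeas" using mG2 mH2 by measurable
  have Hn: "H_norm NX NY f = NX F1 + NY F2"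
  proof -
    have "(\<lambda>t. if 0 < t \<and> t \<le> 1 then real_of_ereal (rearr f t) else 0) = F1"
      unfolding F1_def Rg_def by auto
    moreover have "(\<lambda>t. if 1 \<le> t then real_of_ereal (rearr f t) else 0) = F2"
      unfolding F2_def Rg_def by auto
    ultimately show ?thesis unfolding H_norm_def using ff by auto
  qed
  have ptw: "Rg f t \<le> Rg g (t/2) + Rg h (t/2)" if "0 < t" for t
  proof -
    have "real_of_ereal (rearr f t) \<le> Rg g (t/2) + Rg h (t/2)"
      by (rule real_le_of_rearr[OF rearr_nonneg[OF f] sub[OF that]])
    then show ?thesis using that unfolding Rg_def by simp
  qed
  have nn: "0 \<le> Rg g t" "0 \<le> Rg h t" "0 \<le> Rg f t" for t
    using Rg_nonneg g h f by auto
  have a1: "NX F1 \<le> NX (\<lambda>t. G1 t + H1 t)"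
    by (rule RI_pw[OF X mGH1 mF1]) (auto simp: F1_def G1_def H1_def nn ptw abs_of_nonneg add_nonneg_nonneg)
  have a2: "NX (\<lambda>t. G1 t + H1 t) \<le> ennreal KX * (NX G1 + NX H1)"
    using KX(1) unfolding quasi_triangle_const_def by blast
  have a3: "NX G1 \<le> ennreal c2 * NX g"
  proof -
    have "NX G1 \<le> NX (dilate (1/4) g)"
      by (rule RI[OF X dilate_meas[OF g] mG1], unfold G1_def, rule DB[OF g fg, where a=0]) auto
    then show ?thesis using iiiX[OF g] by order
  qed
  have a4: "NX H1 \<le> ennreal c1 * (ennreal c2 * NY h)"
  proof -
    have "NY H1 \<le> NY (dilate (1/4) h)"
      by (rule RI[OF Y dilate_meas[OF h] mH1], unfold H1_def, rule DB[OF h fh, where a=0]) auto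
    then have "NY H1 \<le> ennreal c2 * NY h" using iiiY[OF h] by order
    moreover have "NX H1 \<le> ennreal c1 * NY H1" by (rule i[OF mH1]) (auto simp: H1_def)
    ultimately show ?thesis by (meson mult_left_mono order_trans zero_le)
  qed
  have b1: "NY F2 \<le> NY (\<lambda>t. G2 t + H2 t)"
    by (rule RI_pw[OF Y mGH2 mF2]) (auto simp: F2_def G2_def H2_def nn ptw abs_of_nonneg add_nonneg_nonneg)
  have b2: "NY (\<lambda>t. G2 t + H2 t) \<le> ennreal KY * (NY G2 + NY H2)"
    using KY(1) unfolding quasi_triangle_const_def by blast
  have b3: "NY H2 \<le> ennreal c2 * NY h"
  proof -
    have "NY H2 \<le> NY (dilate (1/4) h)"
      by (rule RI[OF Y dilate_meas[OF h] mH2], unfold H2_def, rule DB[OF h fh, where a=0]) auto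
    then show ?thesis using iiiY[OF h] by order
  qed
  have b4: "NY G2 \<le> ennreal c1 * (ennreal c2 * NX g)"
  proof -
    have "NY G2 \<le> NY Sg"
    proof (rule RI_pw[OF Y mS mG2])
      fix t
      show "\<bar>G2 t\<bar> \<le> \<bar>Sg t\<bar>"
      proof (cases "1 \<le> t")
        case True
        then have "0 < real_of_int \<lfloor>t\<rfloor> / 2" "real_of_int \<lfloor>t\<rfloor> / 2 \<le> t / 2" by auto
        then have "Rg g (t/2) \<le> Rg g (real_of_int \<lfloor>t\<rfloor> / 2)" by (rule Rg_anti[OF g fg])
        then show ?thesis using True by (simp add: G2_def Sg_def nn abs_of_nonneg)
      qed (simp add: G2_def Sg_def)
    qed
    moreover have "NY Sg \<le> ennreal c1 * NX Sg"
    proof (rule ii[OF mS], intro allI ballI)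
      fix n :: int and x assume x: "x \<in> {real_of_int n..<real_of_int n + 1}"
      then have "\<lfloor>x\<rfloor> = n" by (simp add: floor_eq_iff)
      moreover have "(1 \<le> x) = (1 \<le> real_of_int n)" using x by auto
      ultimately show "Sg x = Sg (real_of_int n)" unfolding Sg_def by simp
    qed
    moreover have "NX Sg \<le> NX (dilate (1/4) g)"
    proof (rule RI[OF X dilate_meas[OF g] mS], unfold Sg_def, rule DB[OF g fg, where a=1])
      fix t c :: real assume t: "t \<in> {1..}" and c: "0 \<le> c" "real_of_int \<lfloor>t\<rfloor> / 2 < c"
      have "t < real_of_int \<lfloor>t\<rfloor> + 1" by linarith
      moreover have "1 \<le> t" using t by simp
      ultimately show "1 \<le> t \<and> t \<le> 1 + 2 * c" using c(2) by linarith
    qed auto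
    ultimately show ?thesis using iiiX[OF g]
      by (meson mult_left_mono order_trans zero_le)
  qed
  define A where "A = NX g"
  define B where "B = NY h"
  define C1 where "C1 = ennreal c1"
  define C2 where "C2 = ennreal c2"
  define C3 where "C3 = ennreal c3"
  have C21: "C2 \<le> C1 * C2"
  proof -
    have "1 \<le> C1" unfolding C1_def using c1 by simp
    then show ?thesis by (metis mult_1 mult_right_mono zero_le)
  qed
  have KX3: "ennreal KX \<le> C3" unfolding C3_def using KX(2) by (simp add: ennreal_leI)
  have KY3: "ennreal KY \<le> C3" unfolding C3_def using KY(2) by (simp add: ennreal_leI)
  have "NX F1 \<le> C3 * (C2 * A + C1 * (C2 * B))"
  proof -
    have "NX F1 \<le> ennreal KX * (NX G1 + NX H1)" using a1 a2 by order
    also have "\<dots> \<le> C3 * (C2 * A + C1 * (C2 * B))"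
      unfolding A_def B_def C1_def C2_def using a3 a4 KX3 by (intro mult_mono add_mono) auto
    finally show ?thesis .
  qed
  moreover have "NY F2 \<le> C3 * (C1 * (C2 * A) + C2 * B)"
  proof -
    have "NY F2 \<le> ennreal KY * (NY G2 + NY H2)" using b1 b2 by order
    also have "\<dots> \<le> C3 * (C1 * (C2 * A) + C2 * B)"
      unfolding A_def B_def C1_def C2_def using b3 b4 KY3 by (intro mult_mono add_mono) auto
    finally show ?thesis .
  qed
  ultimately have "NX F1 + NY F2 \<le> C3 * (C2 * A + C1 * (C2 * B)) + C3 * (C1 * (C2 * A) + C2 * B)"
    by (rule add_mono)
  also have "\<dots> \<le> C3 * ((C1 * C2) * A + (C1 * C2) * B) + C3 * ((C1 * C2) * A + (C1 * C2) * B)"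
    using C21 by (intro add_mono mult_left_mono mult_right_mono) (auto simp: mult.assoc)
  also have "\<dots> = (C1 * C2 * C3 * (A + B)) + (C1 * C2 * C3 * (A + B))"
    by (simp add: algebra_simps)
  also have "\<dots> = 2 * (C1 * C2 * C3 * (A + B))"
    by (simp only: mult_2)
  also have "\<dots> = (2 * C1 * C2 * C3) * (A + B)"
    by (simp only: mult.assoc)
  also have "2 * C1 * C2 * C3 = ennreal (2 * c1 * c2 * c3)"
    unfolding C1_def C2_def C3_def using c1 c2 by (simp add: ennreal_mult ennreal_mult')
  finally show ?thesis unfolding Hn A_def B_def f_def[symmetric] .
qed



lemma setI: "B \<in> sets lebesgue \<Longrightarrow> E \<in> sets lebesgue \<Longrightarrow> B \<union> ((E - B) \<inter> {a..b::real}) \<in> sets lebesgue"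
  by (intro sets.Un sets.Int sets.Diff) simp_all

lemma nonat_lip:
  fixes B E :: "real set"
  assumes B: "B \<in> sets lebesgue" and E: "E \<in> fmeasurable lebesgue" and BE: "B \<subseteq> E" and r: "r \<le> r'" and r0: "0 \<le> r"
  defines "e \<equiv> \<lambda>r. measure lebesgue (B \<union> ((E - B) \<inter> {-r..r}))"
  shows "e r \<le> e r'" "e r' \<le> e r + 2 * (r' - r)"
proof -
  have Es: "E \<in> sets lebesgue" using E by (simp add: fmeasurable_def)
  have fm: "X \<in> fmeasurable lebesgue" if "X \<subseteq> E" "X \<in> sets lebesgue" for X
    using that E by (meson fmeasurableI2)
  have s1: "B \<union> ((E - B) \<inter> {-r..r}) \<in> sets lebesgue" using B Es by (rule setI)
  have s2: "B \<union> ((E - B) \<inter> {-r'..r'}) \<in> fmeasurable lebesgue" using BE setI[OF B Es] by (intro fm) auto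
  show "e r \<le> e r'" unfolding e_def
    by (rule measure_mono_fmeasurable[OF _ s1 s2]) (use r in auto)
  have "e r' \<le> measure lebesgue ((B \<union> ((E - B) \<inter> {-r..r})) \<union> ({-r'..-r} \<union> {r..r'}))"
    unfolding e_def
  proof (rule measure_mono_fmeasurable)
    show "B \<union> ((E - B) \<inter> {-r'..r'}) \<subseteq> (B \<union> ((E - B) \<inter> {-r..r})) \<union> ({-r'..-r} \<union> {r..r'})" by auto
    show "B \<union> ((E - B) \<inter> {-r'..r'}) \<in> sets lebesgue" using s2 by (simp add: fmeasurable_def)
    have sub: "(B \<union> ((E - B) \<inter> {-r..r})) \<union> ({-r'..-r} \<union> {r..r'}) \<subseteq> E \<union> {-r'..r'}" using BE r r0 by auto
    have fE: "E \<union> {-r'..r'} \<in> fmeasurable lebesgue" using E by (intro fmeasurable.Un) auto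
    have ss: "(B \<union> ((E - B) \<inter> {-r..r})) \<union> ({-r'..-r} \<union> {r..r'}) \<in> sets lebesgue"
      by (rule sets.Un[OF s1], rule sets.Un) simp_all
    show "(B \<union> ((E - B) \<inter> {-r..r})) \<union> ({-r'..-r} \<union> {r..r'}) \<in> fmeasurable lebesgue"
      by (rule fmeasurableI2[OF fE sub ss])
  qed
  also have "\<dots> \<le> measure lebesgue (B \<union> ((E - B) \<inter> {-r..r})) + measure lebesgue ({-r'..-r} \<union> {r..r'})"
    by (rule measure_Un_le) (use s1 in auto)
  also have "measure lebesgue ({-r'..-r} \<union> {r..r'}) \<le> measure lebesgue {-r'..-r} + measure lebesgue {r..r'}"
    by (rule measure_Un_le) auto
  also have "measure lebesgue {-r'..-r} + measure lebesgue {r..r'} = 2 * (r' - r)" using r by simp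
  finally show "e r' \<le> e r + 2 * (r' - r)" unfolding e_def by simp
qed

lemma nonat:
  fixes B E :: "real set"
  assumes B: "B \<in> sets lebesgue" and E: "E \<in> sets lebesgue" and BE: "B \<subseteq> E"
    and Efin: "emeasure lebesgue E < \<infinity>" and Bv: "emeasure lebesgue B \<le> ennreal v"
    and vE: "ennreal v \<le> emeasure lebesgue E" and v: "0 \<le> v"
  shows "\<exists>A \<in> sets lebesgue. B \<subseteq> A \<and> A \<subseteq> E \<and> emeasure lebesgue A = ennreal v"
proof -
  have Efm: "E \<in> fmeasurable lebesgue" using E Efin by (simp add: fmeasurable_def)
  have Bfm: "B \<in> fmeasurable lebesgue" using B BE Efm by (meson fmeasurableI2)
  have eE: "emeasure lebesgue E = ennreal (measure lebesgue E)"
    using Efin by (simp add: emeasure_eq_ennreal_measure)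
  have eB: "emeasure lebesgue B = ennreal (measure lebesgue B)"
    using fmeasurableD2[OF Bfm] by (rule emeasure_eq_ennreal_measure)
  have vE': "v \<le> measure lebesgue E" using vE eE by simp
  have Bv': "measure lebesgue B \<le> v" using Bv eB v by simp
  show ?thesis
  proof (cases "v = measure lebesgue E")
    case True
    then show ?thesis using E BE eE by blast
  next
    case False
    then have vlt: "v < measure lebesgue E" using vE' by simp
    define e where "e \<equiv> \<lambda>r. measure lebesgue (B \<union> ((E - B) \<inter> {-r..r}))"
    define An where "An = (\<lambda>n::nat. B \<union> ((E - B) \<inter> {-real n..real n}))"
    have inc: "incseq An" unfolding An_def incseq_def by auto
    have U: "(\<Union>n. An n) = E"
    proof
      show "(\<Union>n. An n) \<subseteq> E" using BE unfolding An_def by auto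
      show "E \<subseteq> (\<Union>n. An n)"
      proof
        fix x assume "x \<in> E"
        obtain n :: nat where "\<bar>x\<bar> \<le> real n" using real_arch_simple by blast
        then have "x \<in> An n" using \<open>x \<in> E\<close> unfolding An_def by auto
        then show "x \<in> (\<Union>n. An n)" by blast
      qed
    qed
    have "(\<lambda>n. measure lebesgue (An n)) \<longlonglongrightarrow> measure lebesgue (\<Union>n. An n)"
    proof -
      have rs: "range An \<subseteq> sets lebesgue" unfolding An_def using setI[OF B E] by blast
      have fU: "emeasure lebesgue (\<Union>n. An n) \<noteq> \<infinity>" using U Efin by simp
      show ?thesis by (rule Lim_measure_incseq[OF rs inc fU])
    qed
    then have "(\<lambda>n. measure lebesgue (An n)) \<longlonglongrightarrow> measure lebesgue E" by (simp only: U)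
    then have "(\<lambda>n. e (real n)) \<longlonglongrightarrow> measure lebesgue E" unfolding An_def e_def .
    then have "\<forall>\<^sub>F n in sequentially. v < e (real n)" using vlt by (rule order_tendstoD(1))
    then obtain n where n: "v < e (real n)" by (metis eventually_sequentially order_refl)
    have e0: "e 0 \<le> v"
    proof -
      have "e 0 \<le> e 0" by simp
      have "e 0 \<le> measure lebesgue B + measure lebesgue ((E - B) \<inter> {-0..0})"
        unfolding e_def by (rule measure_Un_le) (use B E in \<open>auto intro!: sets.Int sets.Diff\<close>)
      also have "measure lebesgue ((E - B) \<inter> {-0..0}) \<le> measure lebesgue {-0..0::real}"
        by (rule measure_mono_fmeasurable) (use B E in \<open>auto intro!: sets.Int sets.Diff simp: fmeasurable_def\<close>)
      finally show ?thesis using Bv' by simp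
    qed
    have cont: "continuous_on {0..real n} e"
    proof (rule lipschitz_on_continuous_on[of 2])
      show "2-lipschitz_on {0..real n} e"
      proof (rule lipschitz_onI)
        fix x y assume "x \<in> {0..real n}" "y \<in> {0..real n}"
        show "dist (e x) (e y) \<le> 2 * dist x y"
        proof (cases "x \<le> y")
          case True
          then show ?thesis using nonat_lip[OF B Efm BE True] \<open>x \<in> {0..real n}\<close> unfolding e_def dist_real_def by auto
        next
          case False
          then have "y \<le> x" by simp
          then show ?thesis using nonat_lip[OF B Efm BE \<open>y \<le> x\<close>] \<open>y \<in> {0..real n}\<close> unfolding e_def dist_real_def by auto
        qed
      qed simp
    qed
    obtain r where r: "0 \<le> r" "r \<le> real n" "e r = v"
      using IVT'[of e 0 v "real n", OF e0 _ _ cont] n by auto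
    define A where "A = B \<union> ((E - B) \<inter> {-r..r})"
    have As: "A \<in> sets lebesgue" unfolding A_def using B E by (rule setI)
    have "A \<subseteq> E" unfolding A_def using BE by auto
    then have "emeasure lebesgue A < \<infinity>" using Efin As by (meson emeasure_mono le_less_trans E)
    then have "emeasure lebesgue A = ennreal (measure lebesgue A)" by (simp add: emeasure_eq_ennreal_measure)
    also have "measure lebesgue A = v" using r(3) unfolding A_def e_def by simp
    finally show ?thesis using As \<open>A \<subseteq> E\<close> unfolding A_def by blast
  qed
qed



lemma cont_above:
  assumes f: "f \<in> lmeas" and t0: "t0 < lam" and fin: "mu f t0 \<noteq> \<infinity>"
    and lt: "\<And>t. t < lam \<Longrightarrow> 1 < mu f t"
  shows "1 \<le> emeasure lebesgue {x. lam \<le> \<bar>f x\<bar>}"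
proof -
  define d where "d = lam - t0"
  have d: "0 < d" using t0 unfolding d_def by simp
  define D where "D = (\<lambda>n::nat. {x. lam - d / Suc n < \<bar>f x\<bar>})"
  have Ds: "range D \<subseteq> sets lebesgue" unfolding D_def using mu_set[OF f] by blast
  have dec: "decseq D" unfolding D_def decseq_def
  proof (intro allI impI subsetI)
    fix m n :: nat and x assume mn: "m \<le> n" and x: "x \<in> {x. lam - d / Suc n < \<bar>f x\<bar>}"
    have "d / Suc n \<le> d / Suc m" using mn d by (intro divide_left_mono) auto
    then show "x \<in> {x. lam - d / Suc m < \<bar>f x\<bar>}" using x by auto
  qed
  have Dfin: "emeasure lebesgue (D n) \<noteq> \<infinity>" for n
  proof -
    have "d / Suc n \<le> d" using d by (simp add: divide_le_eq)
    then have "t0 \<le> lam - d / Suc n" unfolding d_def by simp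
    then have "emeasure lebesgue (D n) \<le> mu f t0" unfolding D_def mu_def
      by (intro emeasure_mono) (use mu_set[OF f] in auto)
    then show ?thesis using fin by (metis infinity_ennreal_def neq_top_trans)
  qed
  have I: "(\<Inter>n. D n) = {x. lam \<le> \<bar>f x\<bar>}"
  proof safe
    fix x assume "lam \<le> \<bar>f x\<bar>"
    moreover have "0 < d / Suc n" for n using d by simp
    ultimately show "x \<in> D n" for n unfolding D_def by (simp add: less_le_trans[of _ lam])
  next
    fix x assume x: "x \<in> (\<Inter>n. D n)"
    show "lam \<le> \<bar>f x\<bar>"
    proof (rule ccontr)
      assume "\<not> lam \<le> \<bar>f x\<bar>"
      then have e: "0 < lam - \<bar>f x\<bar>" by simp
      obtain n :: nat where n: "d / (lam - \<bar>f x\<bar>) < real (Suc n)"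
        using reals_Archimedean2 by (metis less_Suc_eq of_nat_Suc less_trans lessI of_nat_less_iff)
      then have "d < real (Suc n) * (lam - \<bar>f x\<bar>)" using e by (simp add: divide_less_eq)
      then have "d / Suc n < lam - \<bar>f x\<bar>" by (simp add: divide_less_eq mult.commute)
      moreover have "x \<in> D n" using x by blast
      ultimately show False unfolding D_def by simp
    qed
  qed
  have "(INF n. emeasure lebesgue (D n)) = emeasure lebesgue (\<Inter>n. D n)"
    by (rule INF_emeasure_decseq[OF Ds dec Dfin])
  moreover have "1 \<le> (INF n. emeasure lebesgue (D n))"
  proof (rule INF_greatest)
    fix n
    have "lam - d / Suc n < lam" using d by simp
    then have "1 < mu f (lam - d / Suc n)" by (rule lt)
    then show "1 \<le> emeasure lebesgue (D n)" unfolding D_def mu_def by simp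
  qed
  ultimately show ?thesis using I by simp
qed

lemma split_set:
  assumes f: "f \<in> lmeas" and lam: "0 \<le> lam" and mul: "mu f lam \<le> 1"
    and lt: "\<And>t. t < lam \<Longrightarrow> 1 < mu f t"
  shows "\<exists>A \<in> sets lebesgue. {x. lam < \<bar>f x\<bar>} \<subseteq> A \<and> emeasure lebesgue A \<le> 1 \<and>
           (\<forall>t. t < lam \<longrightarrow> emeasure lebesgue ({x. t < \<bar>f x\<bar>} - A) \<le> mu f t - 1)"
proof (cases "\<forall>t<lam. mu f t = \<infinity>")
  case True
  show ?thesis
  proof (intro bexI conjI allI impI)
    show "{x. lam < \<bar>f x\<bar>} \<in> sets lebesgue" using mu_set[OF f] .
    show "emeasure lebesgue {x. lam < \<bar>f x\<bar>} \<le> 1" using mul unfolding mu_def .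
    fix t assume "t < lam"
    then have "mu f t = \<infinity>" using True by blast
    then show "emeasure lebesgue ({x. t < \<bar>f x\<bar>} - {x. lam < \<bar>f x\<bar>}) \<le> mu f t - 1" by simp
  qed simp
next
  case False
  then obtain t0 where t0: "t0 < lam" "mu f t0 \<noteq> \<infinity>" by blast
  define E where "E = {x. lam \<le> \<bar>f x\<bar>}"
  define B where "B = {x. lam < \<bar>f x\<bar>}"
  have Es: "E \<in> sets lebesgue" unfolding E_def
  proof -
    have "{x \<in> space lebesgue. lam \<le> \<bar>f x\<bar>} \<in> sets lebesgue" using f by measurable
    then show "{x. lam \<le> \<bar>f x\<bar>} \<in> sets lebesgue" by simp
  qed
  have Bs: "B \<in> sets lebesgue" unfolding B_def using mu_set[OF f] .
  have BE: "B \<subseteq> E" unfolding B_def E_def by auto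
  have "emeasure lebesgue E \<le> mu f t0" unfolding E_def mu_def
    by (rule emeasure_mono) (use t0 mu_set[OF f] in auto)
  then have Efin: "emeasure lebesgue E < \<infinity>" using t0(2) by (simp add: less_top[symmetric] neq_top_trans)
  have Bv: "emeasure lebesgue B \<le> ennreal 1" using mul unfolding B_def mu_def by simp
  have vE: "ennreal 1 \<le> emeasure lebesgue E" using cont_above[OF f t0 lt] unfolding E_def by simp
  obtain A where A: "A \<in> sets lebesgue" "B \<subseteq> A" "A \<subseteq> E" "emeasure lebesgue A = ennreal 1"
    using nonat[OF Bs Es BE Efin Bv vE] by auto
  show ?thesis
  proof (intro bexI conjI allI impI)
    show "{x. lam < \<bar>f x\<bar>} \<subseteq> A" using A(2) unfolding B_def .
    show "emeasure lebesgue A \<le> 1" using A(4) by simp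
    fix t assume t: "t < lam"
    have sub: "A \<subseteq> {x. t < \<bar>f x\<bar>}" using A(3) t unfolding E_def by auto
    have "emeasure lebesgue ({x. t < \<bar>f x\<bar>} - A) = emeasure lebesgue {x. t < \<bar>f x\<bar>} - emeasure lebesgue A"
      by (rule emeasure_Diff) (use A sub mu_set[OF f] in auto)
    then show "emeasure lebesgue ({x. t < \<bar>f x\<bar>} - A) \<le> mu f t - 1" using A(4) unfolding mu_def by simp
  qed (rule A(1))
qed



lemma partA: assumes X: "ri_space NX" and Y: "ri_space NY" and f[measurable]: "f \<in> lmeas"
  shows "sum_norm NX NY f \<le> H_norm NX NY f"
proof (cases "\<exists>s>0. rearr f s = \<infinity>")
  case True
  then show ?thesis unfolding H_norm_def by simp
next
  case False
  then have ff: "\<forall>s>0. rearr f s \<noteq> \<infinity>" by blast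
  have [measurable]: "Rg f \<in> borel_measurable borel" by (rule Rg_meas[OF f ff])
  define lam where "lam = Rg f 1"
  have lam0: "0 \<le> lam" unfolding lam_def by (rule Rg_nonneg[OF f])
  have mul: "mu f lam \<le> 1" using Rg_gt[OF f ff, of 1 lam] unfolding lam_def by (simp add: not_less)
  have lt: "1 < mu f t" if "t < lam" for t using Rg_gt[OF f ff, of 1 t] that unfolding lam_def by simp
  obtain A where As: "A \<in> sets lebesgue" and BA: "{x. lam < \<bar>f x\<bar>} \<subseteq> A"
    and Ale: "emeasure lebesgue A \<le> 1"
    and Adiff: "\<And>t. t < lam \<Longrightarrow> emeasure lebesgue ({x. t < \<bar>f x\<bar>} - A) \<le> mu f t - 1"
    using split_set[OF f lam0 mul lt] by blast
  define f1 where "f1 = (\<lambda>x. if x \<in> A then f x else 0)"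
  define f2 where "f2 = (\<lambda>x. if x \<in> A then 0 else f x)"
  have mf1: "f1 \<in> lmeas" unfolding f1_def by (rule measurable_If_set) (use As in auto)
  have mf2: "f2 \<in> lmeas" unfolding f2_def by (rule measurable_If_set) (use As in auto)
  have sn: "sum_norm NX NY f \<le> NX f1 + NY f2"
    unfolding sum_norm_def by (rule INF_lower2[of "(f1, f2)"]) (auto simp: f1_def f2_def)
  define F1 where "F1 = (\<lambda>t. if t \<in> {0<..1} then Rg f t else 0)"
  define F2 where "F2 = (\<lambda>t. if t \<in> {1..} then Rg f t else 0)"
  have mF1: "F1 \<in> lmeas" unfolding F1_def by (rule bor_leb) measurable
  have mF2: "F2 \<in> lmeas" unfolding F2_def by (rule bor_leb) measurable
  have Hn: "H_norm NX NY f = NX F1 + NY F2"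
  proof -
    have "(\<lambda>t. if 0 < t \<and> t \<le> 1 then real_of_ereal (rearr f t) else 0) = F1"
      unfolding F1_def Rg_def by auto
    moreover have "(\<lambda>t. if 1 \<le> t then real_of_ereal (rearr f t) else 0) = F2"
      unfolding F2_def Rg_def by auto
    ultimately show ?thesis unfolding H_norm_def using ff by auto
  qed
  have nn: "0 \<le> Rg f t" for t using Rg_nonneg[OF f] .
  have setF1: "{t. \<tau> < \<bar>F1 t\<bar>} = {t. t \<in> {0<..1} \<and> ennreal t < mu f \<tau>}" if "0 \<le> \<tau>" for \<tau>
    using that Rg_gt[OF f ff] nn unfolding F1_def by (auto simp: abs_of_nonneg)
  have setF2: "{t. \<tau> < \<bar>F2 t\<bar>} = {t. t \<in> {1..} \<and> ennreal t < mu f \<tau>}" if "0 \<le> \<tau>" for \<tau>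
    using that Rg_gt[OF f ff] nn unfolding F2_def by (auto simp: abs_of_nonneg)
  have "NX f1 \<le> NX F1"
  proof (rule RI[OF X mF1 mf1])
    fix \<tau> :: real assume \<tau>: "0 \<le> \<tau>"
    have e1: "mu f1 \<tau> = emeasure lebesgue ({x. \<tau> < \<bar>f x\<bar>} \<inter> A)"
      unfolding mu_def using \<tau> by (intro arg_cong[where f="emeasure lebesgue"]) (auto simp: f1_def split: if_splits)
    have "emeasure lebesgue ({x. \<tau> < \<bar>f x\<bar>} \<inter> A) \<le> emeasure lebesgue {x. \<tau> < \<bar>f x\<bar>}"
      by (rule emeasure_mono) (use f in auto)
    then have le1: "mu f1 \<tau> \<le> mu f \<tau>" unfolding e1 by (simp only: mu_def)
    have le2: "mu f1 \<tau> \<le> 1" unfolding e1 using Ale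
      by (meson As emeasure_mono inf_le2 order_trans)
    show "mu f1 \<tau> \<le> mu F1 \<tau>"
    proof (cases "1 < mu f \<tau>")
      case True
      have "{0<..1::real} \<subseteq> {t. \<tau> < \<bar>F1 t\<bar>}" unfolding setF1[OF \<tau>]
          using True by (auto intro: le_less_trans[of _ 1])
      then have "emeasure lebesgue {0<..1::real} \<le> mu F1 \<tau>" unfolding mu_def
        by (rule emeasure_mono) (rule mu_set[OF mF1])
      then show ?thesis using le2 by simp
    next
      case False
      then have "mu f \<tau> \<le> 1" by simp
      then obtain m where m: "mu f \<tau> = ennreal m" "0 \<le> m" "m \<le> 1"
        by (cases "mu f \<tau>") (auto simp: top_unique)
      have "{0<..<m} \<subseteq> {t. \<tau> < \<bar>F1 t\<bar>}" unfolding setF1[OF \<tau>]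
          using m by (auto intro: ennreal_lessI)
      then have "emeasure lebesgue {0<..<m} \<le> mu F1 \<tau>" unfolding mu_def
        by (rule emeasure_mono) (rule mu_set[OF mF1])
      then have "ennreal m \<le> mu F1 \<tau>" using m by simp
      then show ?thesis using le1 m by simp
    qed
  qed
  moreover have "NY f2 \<le> NY F2"
  proof (rule RI[OF Y mF2 mf2])
    fix \<tau> :: real assume \<tau>: "0 \<le> \<tau>"
    have e2: "mu f2 \<tau> = emeasure lebesgue ({x. \<tau> < \<bar>f x\<bar>} - A)"
      unfolding mu_def using \<tau> by (intro arg_cong[where f="emeasure lebesgue"]) (auto simp: f2_def split: if_splits)
    show "mu f2 \<tau> \<le> mu F2 \<tau>"
    proof (cases "\<tau> < lam")
      case False
      then have ee: "{x. \<tau> < \<bar>f x\<bar>} - A = {}" using BA by auto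
      show ?thesis unfolding e2 ee by simp
    next
      case True
      have d: "mu f2 \<tau> \<le> mu f \<tau> - 1" unfolding e2 by (rule Adiff[OF True])
      show ?thesis
      proof (cases "mu f \<tau> = \<infinity>")
        case True
        have "{1::real..} \<subseteq> {t. \<tau> < \<bar>F2 t\<bar>}" unfolding setF2[OF \<tau>]
          using True by auto
        then have "emeasure lebesgue {1::real..} \<le> mu F2 \<tau>" unfolding mu_def
          by (rule emeasure_mono) (rule mu_set[OF mF2])
        then have "mu F2 \<tau> = \<infinity>" using leb_Ici by (simp add: top_unique)
        then show ?thesis by simp
      next
        case False
        then obtain m where m: "mu f \<tau> = ennreal m" "0 \<le> m" by (cases "mu f \<tau>") auto
        have "1 < m" using lt[OF True] m by (metis ennreal_1 ennreal_less_iff zero_le_one)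
        have "{1..<m} \<subseteq> {t. \<tau> < \<bar>F2 t\<bar>}" unfolding setF2[OF \<tau>]
          using m by (auto intro: ennreal_lessI)
        then have "emeasure lebesgue {1..<m} \<le> mu F2 \<tau>" unfolding mu_def
          by (rule emeasure_mono) (rule mu_set[OF mF2])
        then have "ennreal (m - 1) \<le> mu F2 \<tau>" using \<open>1 < m\<close> by simp
        moreover have "mu f \<tau> - 1 = ennreal (m - 1)" using m by (simp flip: ennreal_1 add: ennreal_minus)
        ultimately show ?thesis using d by simp
      qed
    qed
  qed
  ultimately show ?thesis using sn Hn by (metis add_mono order_trans)
qed



lemma K_ge: assumes N: "ri_space N" and K: "quasi_triangle_const N K" shows "1 \<le> K"
proof -
  define u where "u = (indicator {0..<1} :: real \<Rightarrow> real)"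
  have um: "u \<in> lmeas" unfolding u_def by (rule ind_meas)
  have z: "N (\<lambda>x. 0) = 0"
  proof -
    have "(\<lambda>x::real. 0::real) \<in> lmeas" by simp
    then show ?thesis using ri_zero[OF N] by simp
  qed
  have q: "\<forall>f g. N (\<lambda>x. f x + g x) \<le> ennreal K * (N f + N g)"
    using K unfolding quasi_triangle_const_def .
  have le: "N u \<le> ennreal K * N u" using q[rule_format, of u "\<lambda>x. 0"] z by simp
  have "N u < \<infinity>" "N u \<noteq> 0" unfolding u_def using ind_fin[OF N] ind_pos[OF N] by auto
  then obtain a0 where a0: "N u = ennreal a0" by (cases "N u") auto
  then have "0 < a0" using \<open>N u \<noteq> 0\<close> by (metis ennreal_eq_0_iff not_less)
  have K0: "0 \<le> K"
  proof (rule ccontr)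
    assume "\<not> 0 \<le> K"
    then have "ennreal K = 0" by (simp add: ennreal_eq_0_iff)
    then show False using le \<open>N u \<noteq> 0\<close> by simp
  qed
  have "ennreal (K * a0) = ennreal K * ennreal a0" using K0 \<open>0 < a0\<close> by (simp add: ennreal_mult)
  then have "ennreal a0 \<le> ennreal (K * a0)" using le a0 by simp
  then have "1 * a0 \<le> K * a0" using K0 \<open>0 < a0\<close> by simp
  then show ?thesis using \<open>0 < a0\<close> by (simp add: mult_le_cancel_right)
qed

theorem theorem7:
  fixes NX NY :: "(real \<Rightarrow> real) \<Rightarrow> ennreal" and c1 c2 c3 :: real
  assumes X: "ri_space NX" and Y: "ri_space NY"
    and i: "\<And>f. f \<in> lmeas \<Longrightarrow> (\<forall>x. x \<notin> {0..1} \<longrightarrow> f x = 0) \<Longrightarrow> NX f \<le> ennreal c1 * NY f"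
    and ii: "\<And>f. f \<in> lmeas \<Longrightarrow>
               (\<forall>n::int. \<forall>x\<in>{real_of_int n..<real_of_int n + 1}. f x = f (real_of_int n)) \<Longrightarrow>
               NY f \<le> ennreal c1 * NX f"
    and iiiX: "\<And>f. f \<in> lmeas \<Longrightarrow> NX (dilate (1/4) f) \<le> ennreal c2 * NX f"
    and iiiY: "\<And>f. f \<in> lmeas \<Longrightarrow> NY (dilate (1/4) f) \<le> ennreal c2 * NY f"
    and ivX: "\<exists>K<c3. quasi_triangle_const NX K"
    and ivY: "\<exists>K<c3. quasi_triangle_const NY K"
    and f: "f \<in> lmeas"
  shows "sum_norm NX NY f \<le> H_norm NX NY f \<and>
         H_norm NX NY f \<le> ennreal (2 * c1 * c2 * c3) * sum_norm NX NY f"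
proof
  show "sum_norm NX NY f \<le> H_norm NX NY f" by (rule partA[OF X Y f])
  have c1: "1 \<le> c1" by (rule c1_ge[OF X Y i ii])
  have c2: "0 < c2" by (rule c2_pos[OF X iiiX])
  obtain KX where KX: "KX < c3" "quasi_triangle_const NX KX" using ivX by blast
  obtain KY where KY: "KY < c3" "quasi_triangle_const NY KY" using ivY by blast
  have "1 \<le> KX" by (rule K_ge[OF X KX(2)])
  then have c3: "0 < c3" using KX(1) by simp
  have Cpos: "0 < ennreal (2 * c1 * c2 * c3)" using c1 c2 c3 by simp
  have Cfin: "ennreal (2 * c1 * c2 * c3) < top" by simp
  have key: "H_norm NX NY f \<le> ennreal (2 * c1 * c2 * c3) * (NX g + NY h)"
    if pw: "\<forall>x. g x + h x = f x" for g h
  proof -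
    have fe: "(\<lambda>x. g x + h x) = f" by (rule ext, rule spec[OF pw])
    show ?thesis
    proof (cases "NX g < \<infinity> \<and> NY h < \<infinity>")
      case True
      then have "H_norm NX NY (\<lambda>x. g x + h x) \<le> ennreal (2 * c1 * c2 * c3) * (NX g + NY h)"
        using partB_pair[OF X Y i ii iiiX iiiY KX(2,1) KY(2,1) c1 c2, of g h] by blast
      then show ?thesis unfolding fe .
    next
      case False
      then have "NX g + NY h = \<infinity>" by (auto simp flip: top.not_eq_extremum)
      then have "ennreal (2 * c1 * c2 * c3) * (NX g + NY h) = \<infinity>"
        using Cpos c1 c2 c3 by (simp add: ennreal_mult_eq_top_iff)
      then show ?thesis by simp
    qed
  qed
  show "H_norm NX NY f \<le> ennreal (2 * c1 * c2 * c3) * sum_norm NX NY f"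
    unfolding sum_norm_def
    apply (rule INF_bound[OF Cpos Cfin])
    subgoal for p
      using key[of "fst p" "snd p"] by (cases p) simp
    done
qed


end
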